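(* Let $0\leq m\leq M$ be integers, $p\in(0,1)$, and define for $n\in\mathbb{N}$ $$f_{S,d}(n)=2n\sum_{k=m}^{M}\binom{n-1}{k}p^k(1-p)^{n-1-k}$$ (with $f_{S,d}(0)=0$). Then $f_{S,d}$ is non-decreasing on the integers of $\left[0,\frac{m+1}{p}-1\right]$ and non-increasing on the integers of $\left[\frac{M+1}{p}-1,+\infty\right)$.
   Context: Here $S=[m,M]$, $d$ is a distance threshold, and $p=p(d)\in(0,1)$ is the probability that two distinct uniformly random points of the unit torus are at distance at most $d$ (equal to $\pi d^2$ for $d\leq\frac12$). Binomial coefficients follow the convention $\binom{a}{k}=0$ for $k>a\geq0$. The quantity $f_{S,d}(n)$ is the expected order at the next step of the redistributed model when the current order is $n$. *)

theory Defs
  imports Complex_Main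
begin

definition f_Sd :: "nat \<Rightarrow> nat \<Rightarrow> real \<Rightarrow> nat \<Rightarrow> real" where
  "f_Sd m M p n = (if n = 0 then 0 else
     2 * real n * (\<Sum>k = m..M. real ((n - 1) choose k) * p ^ k * (1 - p) ^ (n - 1 - k)))"

end

theory Submission
  imports Defs
begin


definition Bn :: "real \<Rightarrow> nat \<Rightarrow> nat \<Rightarrow> real" where
  "Bn p n j = real (n choose j) * p ^ j * (1 - p) ^ (n - j)"

definition hh :: "real \<Rightarrow> nat \<Rightarrow> nat \<Rightarrow> nat \<Rightarrow> real" where
  "hh p m M n = (\<Sum>j = Suc m..Suc M. real j * Bn p n j)"

lemma f_eq:
  assumes "0 < p"
  shows "f_Sd m M p n = 2 / p * hh p m M n"
proof (cases n)
  case 0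
  have "hh p m M n = 0" unfolding hh_def Bn_def using 0 by (intro sum.neutral) auto
  then show ?thesis using 0 by (simp add: f_Sd_def)
next
  case (Suc n')
  have "hh p m M n = (\<Sum>k = m..M. real (Suc k) * Bn p n (Suc k))"
    unfolding hh_def sum.shift_bounds_cl_Suc_ivl by (rule refl)
  also have "\<dots> = (\<Sum>k = m..M. p * (real n * (real (n' choose k) * p ^ k * (1 - p) ^ (n' - k))))"
  proof (rule sum.cong[OF refl])
    fix k
    have "real (Suc k) * real (Suc n' choose Suc k) = real (Suc n') * real (n' choose k)"
      using Suc_times_binomial[of k n'] by (metis of_nat_mult)
    note e = this
    have "real (Suc k) * Bn p n (Suc k) = (real (Suc k) * real (Suc n' choose Suc k)) * (p * (p ^ k * (1 - p) ^ (n' - k)))"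
      unfolding Bn_def Suc diff_Suc_Suc power_Suc by (simp only: mult_ac)
    also have "\<dots> = p * (real n * (real (n' choose k) * p ^ k * (1 - p) ^ (n' - k)))"
      unfolding e Suc by (simp only: mult_ac)
    finally show "real (Suc k) * Bn p n (Suc k) = p * (real n * (real (n' choose k) * p ^ k * (1 - p) ^ (n' - k)))" .
  qed
  also have "\<dots> = p * real n * (\<Sum>k = m..M. real (n' choose k) * p ^ k * (1 - p) ^ (n' - k))"
    by (simp add: sum_distrib_left mult.assoc)
  finally show ?thesis using assms Suc by (simp add: f_Sd_def)
qed

lemma B_step:
  "Bn p (Suc n) (Suc j) - Bn p n (Suc j) = p * (Bn p n j - Bn p n (Suc j))"
proof (cases "Suc j \<le> n")
  case True
  then have e: "(1 - p) ^ (n - j) = (1 - p) * (1 - p) ^ (n - Suc j)"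
  proof -
    have "n - j = Suc (n - Suc j)" using True by simp
    then show ?thesis by simp
  qed
  show ?thesis unfolding Bn_def by (simp add: e algebra_simps)
next
  case False
  then have "n choose Suc j = 0" by simp
  then show ?thesis unfolding Bn_def by (simp add: algebra_simps)
qed

lemma D_eq:
  assumes "m \<le> M"
  shows "hh p m M (Suc n) - hh p m M n =
     p * (real (Suc m) * Bn p n m - real (Suc M) * Bn p n (Suc M) + (\<Sum>j = Suc m..M. Bn p n j))"
  using assms
proof (induction M rule: dec_induct)
  case base
  have e: "Bn p (Suc n) (Suc m) = Bn p n (Suc m) + p * (Bn p n m - Bn p n (Suc m))"
    using B_step[of p n m] by linarith
  show ?case unfolding hh_def by (simp add: e algebra_simps)
next
  case (step M)
  have "hh p m (Suc M) (Suc n) - hh p m (Suc M) n = (hh p m M (Suc n) - hh p m M n)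
     + real (Suc (Suc M)) * (Bn p (Suc n) (Suc (Suc M)) - Bn p n (Suc (Suc M)))"
    unfolding hh_def using step.hyps by (simp add: algebra_simps)
  also have "\<dots> = p * (real (Suc m) * Bn p n m - real (Suc M) * Bn p n (Suc M) + (\<Sum>j = Suc m..M. Bn p n j))
     + real (Suc (Suc M)) * (p * (Bn p n (Suc M) - Bn p n (Suc (Suc M))))"
    using step.IH B_step[of p n "Suc M"] by simp
  also have "\<dots> = p * (real (Suc m) * Bn p n m - real (Suc (Suc M)) * Bn p n (Suc (Suc M)) + (\<Sum>j = Suc m..Suc M. Bn p n j))"
    using step.hyps by (simp add: algebra_simps)
  finally show ?case .
qed


lemma ratio:
  assumes "j < n"
  shows "Bn p n (Suc j) * real (Suc j) * (1 - p) = Bn p n j * real (n - j) * p"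
proof -
  have c0: "(n choose Suc j) * Suc j = (n - j) * (n choose j)"
    using Suc_times_binomial_eq[of "n - 1" j] binomial_absorb_comp[of n j] assms by simp
  have c: "real (n choose Suc j) * real (Suc j) = real (n choose j) * real (n - j)"
    using c0 by (metis of_nat_mult mult.commute)
  have e: "(1 - p) ^ (n - j) = (1 - p) * (1 - p) ^ (n - Suc j)"
  proof -
    have "n - j = Suc (n - Suc j)" using assms by simp
    then show ?thesis by simp
  qed
  have "Bn p n (Suc j) * real (Suc j) * (1 - p)
      = (real (n choose Suc j) * real (Suc j)) * p ^ j * p * ((1 - p) * (1 - p) ^ (n - Suc j))"
    unfolding Bn_def by (simp add: algebra_simps)
  also have "\<dots> = Bn p n j * real (n - j) * p"
    unfolding c Bn_def e by (simp add: algebra_simps)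
  finally show ?thesis .
qed

lemma Bn_nonneg: "0 \<le> p \<Longrightarrow> p \<le> 1 \<Longrightarrow> 0 \<le> Bn p n j"
  unfolding Bn_def by simp

lemma Bn_dec:
  assumes "0 < p" "p < 1" "(real n + 1) * p \<le> real j + 1"
  shows "Bn p n (Suc j) \<le> Bn p n j"
proof (cases "j < n")
  case True
  have nj: "real (n - j) = real n - real j" using True by simp
  have k: "real (n - j) * p \<le> real (Suc j) * (1 - p)"
    unfolding nj using assms(3) by (simp add: algebra_simps)
  have c: "0 \<le> Bn p n j" using assms by (simp add: Bn_nonneg)
  have "Bn p n (Suc j) * (real (Suc j) * (1 - p)) = Bn p n j * (real (n - j) * p)"
    using ratio[OF True, of p] by (simp only: mult.assoc)
  also have "\<dots> \<le> Bn p n j * (real (Suc j) * (1 - p))"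
    by (rule mult_left_mono[OF k c])
  finally have fin: "Bn p n (Suc j) * (real (Suc j) * (1 - p)) \<le> Bn p n j * (real (Suc j) * (1 - p))" .
  have pos: "0 < real (Suc j) * (1 - p)" using assms by simp
  from mult_right_le_imp_le[OF fin pos] show ?thesis .
next
  case False
  then have "Bn p n (Suc j) = 0" unfolding Bn_def by simp
  then show ?thesis using Bn_nonneg[of p n j] assms by simp
qed

lemma Bn_inc:
  assumes "0 < p" "p < 1" "real j + 1 \<le> (real n + 1) * p"
  shows "Bn p n j \<le> Bn p n (Suc j)"
proof -
  have "(real n + 1) * p < (real n + 1) * 1"
    using assms by (intro mult_strict_left_mono) auto
  then have "(real n + 1) * p < real n + 1" by simp
  then have "real j < real n" using assms(3) by linarith
  then have True: "j < n" by simp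
  have nj: "real (n - j) = real n - real j" using True by simp
  have k: "real (Suc j) * (1 - p) \<le> real (n - j) * p"
    unfolding nj using assms(3) by (simp add: algebra_simps)
  have c: "0 \<le> Bn p n j" using assms by (simp add: Bn_nonneg)
  have "Bn p n j * (real (Suc j) * (1 - p)) \<le> Bn p n j * (real (n - j) * p)"
    by (rule mult_left_mono[OF k c])
  also have "\<dots> = Bn p n (Suc j) * (real (Suc j) * (1 - p))"
    using ratio[OF True, of p] by (simp only: mult.assoc)
  finally have fin: "Bn p n j * (real (Suc j) * (1 - p)) \<le> Bn p n (Suc j) * (real (Suc j) * (1 - p))" .
  have pos: "0 < real (Suc j) * (1 - p)" using assms by simp
  from mult_right_le_imp_le[OF fin pos] show ?thesis .
qed

lemma Bn_dec_chain:
  assumes "0 < p" "p < 1" "(real n + 1) * p \<le> real m + 1" "m \<le> i" "i \<le> k"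
  shows "Bn p n k \<le> Bn p n i"
  using assms(5)
proof (induction k rule: dec_induct)
  case base then show ?case by simp
next
  case (step k)
  have "Bn p n (Suc k) \<le> Bn p n k"
    using assms step.hyps by (intro Bn_dec) auto
  then show ?case using step.IH by linarith
qed

lemma Bn_inc_chain:
  assumes "0 < p" "p < 1" "real k \<le> (real n + 1) * p" "i \<le> k"
  shows "Bn p n i \<le> Bn p n k"
  using assms(4,3)
proof (induction k rule: dec_induct)
  case base then show ?case by simp
next
  case (step k)
  have "Bn p n k \<le> Bn p n (Suc k)"
    using assms step.prems by (intro Bn_inc) auto
  then show ?case using step by simp
qed

lemma hh_up:
  assumes "m \<le> M" "0 < p" "p < 1" "(real n + 1) * p \<le> real m + 1"
  shows "hh p m M n \<le> hh p m M (Suc n)"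
proof -
  have s: "(\<Sum>j = Suc m..M. Bn p n (Suc M)) \<le> (\<Sum>j = Suc m..M. Bn p n j)"
    using assms by (intro sum_mono Bn_dec_chain) auto
  have sc: "(\<Sum>j = Suc m..M. Bn p n (Suc M)) = real (M - m) * Bn p n (Suc M)"
    by simp
  have b: "Bn p n (Suc M) \<le> Bn p n m"
    using assms by (intro Bn_dec_chain) auto
  have bb: "real (Suc m) * Bn p n (Suc M) \<le> real (Suc m) * Bn p n m"
    using b by (intro mult_left_mono) auto
  have r: "real (Suc M) = real (Suc m) + real (M - m)" using assms by simp
  have rr: "real (Suc M) * Bn p n (Suc M) = real (Suc m) * Bn p n (Suc M) + real (M - m) * Bn p n (Suc M)"
    unfolding r by (rule distrib_right)
  have X: "0 \<le> real (Suc m) * Bn p n m - real (Suc M) * Bn p n (Suc M) + (\<Sum>j = Suc m..M. Bn p n j)"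
    using s sc bb rr by linarith
  have "0 \<le> p * (real (Suc m) * Bn p n m - real (Suc M) * Bn p n (Suc M) + (\<Sum>j = Suc m..M. Bn p n j))"
    using X assms(2) by simp
  then show ?thesis using D_eq[OF assms(1), of p n] by linarith
qed

lemma hh_down:
  assumes "m \<le> M" "0 < p" "p < 1" "real M + 1 \<le> (real n + 1) * p"
  shows "hh p m M (Suc n) \<le> hh p m M n"
proof -
  have s: "(\<Sum>j = Suc m..M. Bn p n j) \<le> (\<Sum>j = Suc m..M. Bn p n (Suc M))"
    using assms by (intro sum_mono Bn_inc_chain) auto
  have sc: "(\<Sum>j = Suc m..M. Bn p n (Suc M)) = real (M - m) * Bn p n (Suc M)"
    by simp
  have b: "Bn p n m \<le> Bn p n (Suc M)"
    using assms by (intro Bn_inc_chain) auto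
  have bb: "real (Suc m) * Bn p n m \<le> real (Suc m) * Bn p n (Suc M)"
    using b by (intro mult_left_mono) auto
  have r: "real (Suc M) = real (Suc m) + real (M - m)" using assms by simp
  have rr: "real (Suc M) * Bn p n (Suc M) = real (Suc m) * Bn p n (Suc M) + real (M - m) * Bn p n (Suc M)"
    unfolding r by (rule distrib_right)
  have X: "real (Suc m) * Bn p n m - real (Suc M) * Bn p n (Suc M) + (\<Sum>j = Suc m..M. Bn p n j) \<le> 0"
    using s sc bb rr by linarith
  have "p * (real (Suc m) * Bn p n m - real (Suc M) * Bn p n (Suc M) + (\<Sum>j = Suc m..M. Bn p n j)) \<le> 0"
    using X assms(2) by (simp add: mult_nonneg_nonpos)
  then show ?thesis using D_eq[OF assms(1), of p n] by linarith
qed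

lemma chain_up:
  fixes h :: "nat \<Rightarrow> real"
  assumes "a \<le> b" "\<And>n. a \<le> n \<Longrightarrow> n < b \<Longrightarrow> h n \<le> h (Suc n)"
  shows "h a \<le> h b"
  using assms
proof (induction b rule: dec_induct)
  case base then show ?case by simp
next
  case (step k)
  have "h k \<le> h (Suc k)" using step.prems step.hyps by simp
  moreover have "h a \<le> h k" using step.IH step.prems by simp
  ultimately show ?case by linarith
qed

lemma chain_down:
  fixes h :: "nat \<Rightarrow> real"
  assumes "a \<le> b" "\<And>n. a \<le> n \<Longrightarrow> n < b \<Longrightarrow> h (Suc n) \<le> h n"
  shows "h b \<le> h a"
  using chain_up[of a b "\<lambda>n. - h n"] assms by simp

theorem theorem9:
  fixes m M :: nat and p :: real
  assumes "m \<le> M" and "0 < p" and "p < 1"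
  shows "(\<forall>a b :: nat. a \<le> b \<and> real b \<le> (real m + 1) / p - 1
            \<longrightarrow> f_Sd m M p a \<le> f_Sd m M p b)
       \<and> (\<forall>a b :: nat. (real M + 1) / p - 1 \<le> real a \<and> a \<le> b
            \<longrightarrow> f_Sd m M p b \<le> f_Sd m M p a)"
proof (intro conjI allI impI)
  have f: "\<And>n. f_Sd m M p n = 2 / p * hh p m M n" using f_eq assms(2) by blast
  have pp: "0 < 2 / p" using assms by simp
  fix a b :: nat
  {
    assume h: "a \<le> b \<and> real b \<le> (real m + 1) / p - 1"
    have "hh p m M a \<le> hh p m M b"
    proof (rule chain_up)
      show "a \<le> b" using h by simp
      fix n assume "a \<le> n" "n < b"
      then have "real n + 1 \<le> (real m + 1) / p - 1" using h by linarith
      then have "real n + 1 \<le> (real m + 1) / p" by linarith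
      then have "(real n + 1) * p \<le> real m + 1" using assms(2) by (simp add: pos_le_divide_eq)
      then show "hh p m M n \<le> hh p m M (Suc n)" using hh_up assms by blast
    qed
    then show "f_Sd m M p a \<le> f_Sd m M p b" unfolding f using pp by (intro mult_left_mono) auto
  }
  {
    assume h: "(real M + 1) / p - 1 \<le> real a \<and> a \<le> b"
    have "hh p m M b \<le> hh p m M a"
    proof (rule chain_down)
      show "a \<le> b" using h by simp
      fix n assume "a \<le> n" "n < b"
      then have "(real M + 1) / p \<le> real n + 1" using h by linarith
      then have "real M + 1 \<le> (real n + 1) * p" using assms(2) by (simp add: pos_divide_le_eq)
      then show "hh p m M (Suc n) \<le> hh p m M n" using hh_down assms by blast
    qed
    then show "f_Sd m M p b \<le> f_Sd m M p a" unfolding f using pp by (intro mult_left_mono) auto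
  }
qed

end
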